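(* Let $X$ be a $d$-uniform $\{\lambda_i\}$-two-sided local-spectral expander with all $\lambda_i>0$. Then for every $k<d$, the degree of the $k$-skeleton of $X$ satisfies \[\deg^{(k)}(X)\ge\frac{1}{(k-1)!}\prod_{i=1}^{k-1}\frac{1}{\lambda_i}.\]
   Context: $X$ is a $d$-uniform simplicial complex ($X(j)$ its faces of size $j$) with a full-support distribution on $X(d)$; links $X_t=\{s\setminus t:t\subseteq s\in X\}$ carry the induced distribution, and the graph underlying $X_t$ has vertices $X_t(1)$ and weighted edges $X_t(2)$. A weighted graph is a $\lambda$-two-sided expander if all nontrivial eigenvalues of its normalized adjacency operator lie in $[-\lambda,\lambda]$. $X$ is a $\{\lambda_i\}$-two-sided local-spectral expander if for every $i\le d-2$ and every $t\in X(i)$ the graph underlying $X_t$ is a $\lambda_i$-two-sided expander. The $k$-th degree is $\deg^{(k)}(X)=\max_{v\in X(1)}|\{s\in X(k):v\in s\}|$. *)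

theory Defs
  imports "HOL-Analysis.Analysis" "Jordan_Normal_Form.Char_Poly"
begin

definition faces :: "'a set set \<Rightarrow> nat \<Rightarrow> 'a set set" where
  "faces X j = {s \<in> X. card s = j}"

definition simplicial_complex :: "'a set set \<Rightarrow> bool" where
  "simplicial_complex X \<longleftrightarrow> finite X \<and> (\<forall>s\<in>X. finite s) \<and>
     (\<forall>s\<in>X. \<forall>t. t \<subseteq> s \<longrightarrow> t \<in> X)"

definition d_uniform :: "'a set set \<Rightarrow> nat \<Rightarrow> bool" where
  "d_uniform X d \<longleftrightarrow> simplicial_complex X \<and> faces X d \<noteq> {} \<and>
     (\<forall>s\<in>X. \<exists>f\<in>faces X d. s \<subseteq> f)"

definition full_support_distribution :: "'a set set \<Rightarrow> nat \<Rightarrow> ('a set \<Rightarrow> real) \<Rightarrow> bool" where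
  "full_support_distribution X d w \<longleftrightarrow>
     (\<forall>s\<in>faces X d. w s > 0) \<and> (\<Sum>s\<in>faces X d. w s) = 1"

definition link :: "'a set set \<Rightarrow> 'a set \<Rightarrow> 'a set set" where
  "link X t = {s - t | s. s \<in> X \<and> t \<subseteq> s}"

text \<open>Induced distribution on the j-faces of the link X_t: draw a top face f of X
containing t according to w (conditioned on f containing t), then a uniformly random
j-subset of f - t.\<close>
definition link_dist :: "'a set set \<Rightarrow> nat \<Rightarrow> ('a set \<Rightarrow> real) \<Rightarrow> 'a set \<Rightarrow> nat \<Rightarrow> 'a set \<Rightarrow> real" where
  "link_dist X d w t j a =
     (\<Sum>f\<in>{f \<in> faces X d. t \<union> a \<subseteq> f}. w f) /
     ((\<Sum>f\<in>{f \<in> faces X d. t \<subseteq> f}. w f) * real ((d - card t) choose j))"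

definition link_vertices :: "'a set set \<Rightarrow> 'a set \<Rightarrow> 'a set" where
  "link_vertices X t = {v. {v} \<in> faces (link X t) 1}"

definition link_edge_weight :: "'a set set \<Rightarrow> nat \<Rightarrow> ('a set \<Rightarrow> real) \<Rightarrow> 'a set \<Rightarrow> 'a \<Rightarrow> 'a \<Rightarrow> real" where
  "link_edge_weight X d w t u v =
     (if {u, v} \<in> faces (link X t) 2 then link_dist X d w t 2 {u, v} else 0)"

definition norm_adj :: "'a set set \<Rightarrow> nat \<Rightarrow> ('a set \<Rightarrow> real) \<Rightarrow> 'a set \<Rightarrow> 'a \<Rightarrow> 'a \<Rightarrow> real" where
  "norm_adj X d w t u v =
     link_edge_weight X d w t u v / (\<Sum>x\<in>link_vertices X t. link_edge_weight X d w t u x)"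

text \<open>Matrix of the normalized adjacency operator w.r.t. an (arbitrary) enumeration of the
vertex set; its spectrum does not depend on the enumeration.\<close>
definition enum_set :: "'a set \<Rightarrow> 'a list" where
  "enum_set V = (SOME xs. distinct xs \<and> set xs = V)"

definition norm_adj_mat :: "'a set set \<Rightarrow> nat \<Rightarrow> ('a set \<Rightarrow> real) \<Rightarrow> 'a set \<Rightarrow> real mat" where
  "norm_adj_mat X d w t =
     (let vs = enum_set (link_vertices X t)
      in mat (length vs) (length vs) (\<lambda>(i, j). norm_adj X d w t (vs ! i) (vs ! j)))"

text \<open>Eigenvalues with algebraic multiplicity (complex roots of the characteristic polynomial).\<close>
definition eigenvalues_mset :: "real mat \<Rightarrow> complex multiset" where
  "eigenvalues_mset A = proots (map_poly complex_of_real (char_poly A))"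

text \<open>lambda-two-sided expander: all nontrivial eigenvalues (all eigenvalues with one copy of the
trivial eigenvalue 1 removed) lie in [-lambda, lambda].\<close>
definition two_sided_expander :: "real mat \<Rightarrow> real \<Rightarrow> bool" where
  "two_sided_expander A lam \<longleftrightarrow>
     (\<forall>z \<in># eigenvalues_mset A - {#1#}. Im z = 0 \<and> - lam \<le> Re z \<and> Re z \<le> lam)"

definition local_spectral_expander ::
  "'a set set \<Rightarrow> nat \<Rightarrow> ('a set \<Rightarrow> real) \<Rightarrow> (nat \<Rightarrow> real) \<Rightarrow> bool" where
  "local_spectral_expander X d w lam \<longleftrightarrow>
     (\<forall>i \<le> d - 2. \<forall>t \<in> faces X i. two_sided_expander (norm_adj_mat X d w t) (lam i))"

definition kdeg :: "'a set set \<Rightarrow> nat \<Rightarrow> nat" where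
  "kdeg X k = Max {card {s \<in> faces X k. v \<in> s} | v. {v} \<in> faces X 1}"

end

theory Submission
  imports Defs "Jordan_Normal_Form.Schur_Decomposition"
begin


definition trc :: "'a::comm_ring_1 mat \<Rightarrow> 'a" where
  "trc M = (\<Sum>i<dim_row M. M $$ (i,i))"

lemma trc_comm: assumes "X \<in> carrier_mat n n" "Y \<in> carrier_mat n n"
  shows "trc (X * Y) = trc (Y * X)"
proof -
  have "trc (X*Y) = (\<Sum>i<n. \<Sum>k<n. X $$ (i,k) * Y $$ (k,i))"
    using assms unfolding trc_def
    by (auto simp: scalar_prod_def lessThan_atLeast0 intro!: sum.cong)
  also have "\<dots> = (\<Sum>k<n. \<Sum>i<n. Y $$ (k,i) * X $$ (i,k))"
    by (subst sum.swap) (simp add: mult.commute)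
  also have "\<dots> = trc (Y*X)"
    using assms unfolding trc_def
    by (auto simp: scalar_prod_def lessThan_atLeast0 intro!: sum.cong)
  finally show ?thesis .
qed

lemma trc_similar: assumes "similar_mat_wit A B P Q"
  shows "trc A = trc B"
proof -
  obtain n where n: "n = dim_row A" by blast
  have sw: "{A,B,P,Q} \<subseteq> carrier_mat n n \<and> P * Q = 1\<^sub>m n \<and> Q * P = 1\<^sub>m n \<and> A = P * B * Q"
    using assms unfolding similar_mat_wit_def Let_def n[symmetric] .
  have c: "B \<in> carrier_mat n n" "P \<in> carrier_mat n n" "Q \<in> carrier_mat n n"
    using sw by (simp_all only: insert_subset)
  have PQ: "Q * P = 1\<^sub>m n" using sw by blast
  have A: "A = P * B * Q" using sw by blast
  have "trc (P * B * Q) = trc (Q * (P * B))" using c by (intro trc_comm) auto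
  also have "Q * (P * B) = (Q * P) * B" using c by (intro assoc_mult_mat[symmetric]) auto
  also have "(Q * P) * B = B" using c PQ by simp
  finally show ?thesis using A by simp
qed

lemma trc_upper: assumes "B \<in> carrier_mat n n"
  shows "trc B = sum_list (diag_mat B)"
  using assms unfolding trc_def diag_mat_def
  by (simp add: sum_list_sum_nth lessThan_atLeast0)

lemma proots_lin: "proots (\<Prod>a\<leftarrow>as. [:- (a::complex), 1:]) = mset as"
proof (induction as)
  case (Cons a as)
  have nz: "(\<Prod>a\<leftarrow>as. [:- (a::complex), 1:]) \<noteq> 0" by (auto simp: prod_list_zero_iff)
  have "proots ([:- a, 1:] * (\<Prod>a\<leftarrow>as. [:- (a::complex), 1:])) = proots [:- a, 1:] + proots (\<Prod>a\<leftarrow>as. [:- (a::complex), 1:])"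
    using nz by (intro proots_mult) auto
  also have "proots [:- a, 1:] = {#a#}" using proots_linear_factor[of "-a"] by simp
  finally show ?case using Cons by simp
qed simp

lemma spectral_bound:
  fixes A :: "real mat"
  assumes A: "A \<in> carrier_mat n n" and diag: "\<forall>i<n. A $$ (i,i) = 0"
    and eig: "eigenvalue A 1"
    and exp: "two_sided_expander A lam"
  shows "1 \<le> lam * (real n - 1)"
proof -
  define Ac where "Ac = map_mat complex_of_real A"
  have Ac: "Ac \<in> carrier_mat n n" using A by (simp add: Ac_def)
  have cp: "char_poly Ac = map_poly complex_of_real (char_poly A)"
    unfolding Ac_def by (rule of_real_hom.char_poly_hom[OF A])
  obtain as where as: "char_poly Ac = (\<Prod>a\<leftarrow>as. [:- a, 1:])" and len: "length as = n"
    using char_poly_factorized[OF Ac] by blast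
  have M: "eigenvalues_mset A = mset as"
    unfolding eigenvalues_mset_def cp[symmetric] as by (rule proots_lin)
  obtain B P Q where BPQ: "schur_decomposition Ac as = (B,P,Q)" by (cases "schur_decomposition Ac as") auto
  from schur_decomposition[OF Ac as BPQ] have
    sim: "similar_mat_wit Ac B P Q" and dB: "diag_mat B = as" by auto
  have Bc: "B \<in> carrier_mat n n" using sim Ac unfolding similar_mat_wit_def Let_def by auto
  have "trc Ac = 0" using Ac diag A unfolding trc_def Ac_def by simp
  hence s0: "sum_list as = 0" using trc_similar[OF sim] trc_upper[OF Bc] dB by simp
  have "poly (char_poly A) 1 = 0" using eig eigenvalue_root_char_poly[OF A] by simp
  hence "poly (char_poly Ac) 1 = 0" unfolding cp by simp
  hence one: "1 \<in> set as" unfolding as by (force simp: poly_prod_list prod_list_zero_iff)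
  hence one': "1 \<in># mset as" by simp
  define R where "R = mset as - {#1#}"
  have sz: "size R = n - 1" unfolding R_def using one' len by (simp add: size_Diff_singleton)
  have sR: "sum_mset R = -1"
  proof -
    have "mset as = R + {#1#}" unfolding R_def using one' by simp
    hence "sum_mset (mset as) = sum_mset R + 1" by simp
    moreover have "sum_mset (mset as) = sum_list as" by (simp add: sum_mset_sum_list)
    ultimately have h: "sum_mset R + 1 = 0" using s0 by simp
    have "sum_mset R = (sum_mset R + 1) - 1" by simp
    with h show ?thesis by simp
  qed
  have bnd: "\<forall>z\<in>#R. - lam \<le> Re z" using exp unfolding two_sided_expander_def M R_def by blast
  have "Re (sum_mset R) = sum_mset (image_mset Re R)"
    by (induction R) auto
  also have "\<dots> \<ge> sum_mset (image_mset (\<lambda>_. - lam) R)"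
    using bnd by (intro sum_mset_mono) auto
  finally have "1 \<le> lam * real (size R)" using sR by (simp add: mult.commute)
  moreover have "n \<ge> 1" using len one by (cases as) auto
  hence "real (size R) = real n - 1" using sz by simp
  ultimately show ?thesis by (simp add: mult.commute)
qed



lemma LV: "u \<in> link_vertices X t \<longleftrightarrow> u \<notin> t \<and> insert u t \<in> X"
proof
  assume "u \<in> link_vertices X t"
  then obtain s where s: "{u} = s - t" "s \<in> X" "t \<subseteq> s"
    unfolding link_vertices_def faces_def link_def by auto
  hence "s = insert u t" by blast
  thus "u \<notin> t \<and> insert u t \<in> X" using s by blast
next
  assume a: "u \<notin> t \<and> insert u t \<in> X"
  hence "{u} = insert u t - t" by blast
  thus "u \<in> link_vertices X t" using a
    unfolding link_vertices_def faces_def link_def by auto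
qed

lemma edge_in:
  assumes "u \<noteq> v" "u \<notin> t" "v \<notin> t" "t \<union> {u,v} \<in> X"
  shows "{u,v} \<in> faces (link X t) 2"
proof -
  have "{u,v} = (t \<union> {u,v}) - t" using assms by blast
  hence "{u,v} \<in> link X t" using assms unfolding link_def by blast
  moreover have "card {u,v} = 2" using assms by simp
  ultimately show ?thesis unfolding faces_def by blast
qed

lemma sum_distinct_nth: "distinct xs \<Longrightarrow> (\<Sum>j<length xs. g (xs ! j)) = sum g (set xs)"
  by (simp add: sum_list_distinct_conv_sum_set[symmetric] sum_list_sum_nth atLeast0LessThan)

lemma link_bound:
  assumes du: "d_uniform X d" and fs: "full_support_distribution X d w"
    and t: "t \<in> faces X i" and i: "i + 2 \<le> d"
    and ex: "two_sided_expander (norm_adj_mat X d w t) lam" and lp: "lam > 0"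
  shows "real (card (link_vertices X t)) \<ge> 1 / lam"
proof -
  have SC: "finite X" "\<forall>s\<in>X. finite s" "\<forall>s\<in>X. \<forall>r. r \<subseteq> s \<longrightarrow> r \<in> X"
    using du unfolding d_uniform_def simplicial_complex_def by auto
  have top: "\<forall>s\<in>X. \<exists>f\<in>faces X d. s \<subseteq> f" using du unfolding d_uniform_def by auto
  have wpos: "\<forall>f\<in>faces X d. w f > 0" using fs unfolding full_support_distribution_def by auto
  have wnn: "\<forall>f\<in>faces X d. w f \<ge> 0" using wpos less_imp_le by blast
  have finF: "finite (faces X d)" using SC(1) unfolding faces_def by auto
  have tX: "t \<in> X" and ct: "card t = i" using t unfolding faces_def by auto
  have fint: "finite t" using SC tX by blast
  define L where "L = link_vertices X t"
  have down: "\<And>s r. s \<in> X \<Longrightarrow> r \<subseteq> s \<Longrightarrow> r \<in> X" using SC by blast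
  have LX: "L \<subseteq> \<Union>X"
  proof
    fix u assume "u \<in> L"
    hence "insert u t \<in> X" unfolding L_def LV by blast
    thus "u \<in> \<Union>X" by blast
  qed
  have "finite (\<Union>X)" using SC(1,2) by (intro finite_Union) auto
  hence finL: "finite L" using LX by (rule finite_subset[rotated])
  define W where "W = (\<Sum>f\<in>{f \<in> faces X d. t \<subseteq> f}. w f)"
  obtain f0 where f0: "f0 \<in> faces X d" "t \<subseteq> f0" using top tX by blast
  have Wpos: "W > 0" unfolding W_def
  proof -
    have "w f0 \<le> (\<Sum>f\<in>{f \<in> faces X d. t \<subseteq> f}. w f)"
      using f0 wpos finF by (intro member_le_sum) auto
    moreover have "w f0 > 0" using wpos f0 by blast
    ultimately show "0 < (\<Sum>f\<in>{f \<in> faces X d. t \<subseteq> f}. w f)" by linarith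
  qed
  have chpos: "real ((d - card t) choose 2) > 0" using ct i by simp
  define ew where "ew = link_edge_weight X d w t"
  have ew_nonneg: "ew u x \<ge> 0" for u x
    unfolding ew_def link_edge_weight_def link_dist_def
    using Wpos chpos wnn unfolding W_def
    by (auto intro!: divide_nonneg_nonneg sum_nonneg mult_nonneg_nonneg)
  have ew_diag: "ew u u = 0" for u
    unfolding ew_def link_edge_weight_def faces_def by simp
  have ew_pos: "\<exists>x\<in>L. ew u x > 0" if u: "u \<in> L" for u
  proof -
    have ut: "u \<notin> t" and utX: "insert u t \<in> X" using u unfolding L_def LV by auto
    obtain f where f: "f \<in> faces X d" "insert u t \<subseteq> f" using top utX by blast
    have fX: "f \<in> X" using f unfolding faces_def by simp
    have ff: "finite f" "card f = d" using f fX SC(2) unfolding faces_def by auto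
    have "card (insert u t) = i + 1" using ut ct fint by (simp add: card_insert_if)
    hence "card (insert u t) < card f" using ff i by simp
    moreover have "finite (insert u t)" using fint by simp
    ultimately have "\<not> f \<subseteq> insert u t" using card_mono by (meson leD)
    then obtain x where x: "x \<in> f" "x \<notin> insert u t" by blast
    have sX: "t \<union> {u,x} \<in> X" using down[OF fX, of "t \<union> {u,x}"] f(2) x(1) by blast
    have "insert x t \<in> X" using down[OF sX, of "insert x t"] by blast
    hence xL: "x \<in> L" unfolding L_def LV using x by auto
    have e: "{u,x} \<in> faces (link X t) 2" using edge_in[of u x t X] x ut sX by auto
    have "w f \<le> (\<Sum>g\<in>{g \<in> faces X d. t \<union> {u, x} \<subseteq> g}. w g)"
      using f x wpos finF by (intro member_le_sum) auto
    moreover have "w f > 0" using wpos f by blast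
    ultimately have num: "(\<Sum>g\<in>{g \<in> faces X d. t \<union> {u, x} \<subseteq> g}. w g) > 0" by linarith
    have "ew u x = (\<Sum>g\<in>{g \<in> faces X d. t \<union> {u, x} \<subseteq> g}. w g) / (W * real ((d - card t) choose 2))"
      unfolding ew_def link_edge_weight_def link_dist_def W_def using e by simp
    also have "\<dots> > 0" using num Wpos chpos by simp
    finally show ?thesis using xL by blast
  qed
  define vs where "vs = enum_set L"
  have vs: "distinct vs \<and> set vs = L"
    unfolding vs_def enum_set_def by (rule someI_ex) (use finite_distinct_list[OF finL] in auto)
  define n where "n = length vs"
  have nL: "n = card L" using vs distinct_card[of vs] unfolding n_def by simp
  define A where "A = norm_adj_mat X d w t"
  have A: "A = mat n n (\<lambda>(a, b). norm_adj X d w t (vs ! a) (vs ! b))"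
    unfolding A_def norm_adj_mat_def n_def vs_def L_def Let_def by simp
  have Ac: "A \<in> carrier_mat n n" unfolding A by simp
  have diag: "\<forall>a<n. A $$ (a,a) = 0"
    unfolding A norm_adj_def using ew_diag unfolding ew_def by simp
  have tL: "L \<noteq> {}"
  proof -
    have f0X: "f0 \<in> X" using f0 unfolding faces_def by simp
    have ff: "finite f0" "card f0 = d" using f0 f0X SC(2) unfolding faces_def by auto
    have "card t < card f0" using ff ct i by simp
    hence "\<not> f0 \<subseteq> t" using card_mono[OF fint] by (meson leD)
    then obtain u where u: "u \<in> f0" "u \<notin> t" by blast
    have "insert u t \<in> X" using down[OF f0X, of "insert u t"] f0(2) u(1) by blast
    hence "u \<in> L" using u(2) unfolding L_def LV by simp
    thus ?thesis by blast
  qed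
  have npos: "n > 0" using nL tL finL card_gt_0_iff by blast
  define ones where "ones = (vec n (\<lambda>_. 1) :: real vec)"
  have rows: "A *\<^sub>v ones = 1 \<cdot>\<^sub>v ones"
  proof (rule eq_vecI)
    fix a assume a: "a < dim_vec (1 \<cdot>\<^sub>v ones :: real vec)"
    hence a': "a < n" by (simp add: ones_def)
    define u where "u = vs ! a"
    have uL: "u \<in> L" using vs a' unfolding u_def n_def by auto
    define S where "S = (\<Sum>x\<in>L. ew u x)"
    obtain x where x: "x \<in> L" "ew u x > 0" using ew_pos[OF uL] by blast
    have "ew u x \<le> S" unfolding S_def using finL x ew_nonneg by (intro member_le_sum) auto
    hence Spos: "S > 0" using x by simp
    have "vec_index (A *\<^sub>v ones) a = (\<Sum>b<n. norm_adj X d w t u (vs ! b))"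
      using a' unfolding A u_def ones_def by (simp add: scalar_prod_def lessThan_atLeast0)
    also have "\<dots> = (\<Sum>b<n. ew u (vs ! b)) / S"
      unfolding norm_adj_def S_def ew_def L_def by (simp add: sum_divide_distrib)
    also have "(\<Sum>b<n. ew u (vs ! b)) = S"
      unfolding S_def n_def using vs sum_distinct_nth[of vs "ew u"] by simp
    finally show "vec_index (A *\<^sub>v ones) a = vec_index (1 \<cdot>\<^sub>v ones) a" using Spos a' by (simp add: ones_def)
  qed (use Ac in \<open>simp add: ones_def\<close>)
  have eig: "eigenvalue A 1"
    unfolding eigenvalue_def eigenvector_def
    using Ac rows npos by (intro exI[of _ "ones"]) (auto simp: vec_eq_iff ones_def)
  have "1 \<le> lam * (real n - 1)"
    using spectral_bound[OF Ac diag eig] ex unfolding A_def by simp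
  hence "1 / lam \<le> real n - 1" using lp by (simp add: field_simps)
  thus ?thesis using nL unfolding L_def by simp
qed



lemma double_count:
  assumes finX: "finite X" and fin: "\<forall>s\<in>X. finite s" and tX: "finite t" and ct: "card t = j"
    and finL: "finite L" and Lt: "\<forall>u\<in>L. u \<notin> t"
  shows "(\<Sum>u\<in>L. card {s \<in> faces X k. insert u t \<subseteq> s}) \<le> (k - j) * card {s \<in> faces X k. t \<subseteq> s}"
proof -
  define S where "S = {s \<in> faces X k. t \<subseteq> s}"
  have finS: "finite S" unfolding S_def faces_def using finX by simp
  have "(\<Sum>u\<in>L. card {s \<in> faces X k. insert u t \<subseteq> s}) = (\<Sum>u\<in>L. \<Sum>s\<in>S. if u \<in> s then 1 else 0)"
  proof (rule sum.cong)
    fix u assume "u \<in> L"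
    have e: "{s \<in> faces X k. insert u t \<subseteq> s} = {s \<in> S. u \<in> s}" unfolding S_def by auto
    show "card {s \<in> faces X k. insert u t \<subseteq> s} = (\<Sum>s\<in>S. if u \<in> s then 1 else 0)"
      unfolding e using finS by (simp add: sum.If_cases Int_def)
  qed simp
  also have "\<dots> = (\<Sum>s\<in>S. \<Sum>u\<in>L. if u \<in> s then 1 else 0)" by (rule sum.swap)
  also have "\<dots> = (\<Sum>s\<in>S. card (L \<inter> s))"
    using finL by (intro sum.cong) (simp_all add: sum.If_cases Int_commute)
  also have "\<dots> \<le> (\<Sum>s\<in>S. k - j)"
  proof (rule sum_mono)
    fix s assume s: "s \<in> S"
    hence sX: "s \<in> X" "card s = k" "t \<subseteq> s" unfolding S_def faces_def by auto
    have fs: "finite s" using sX fin by blast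
    have "L \<inter> s \<subseteq> s - t" using Lt by blast
    hence "card (L \<inter> s) \<le> card (s - t)" using fs by (intro card_mono) auto
    also have "card (s - t) = k - j" using sX ct fs by (simp add: card_Diff_subset finite_subset)
    finally show "card (L \<inter> s) \<le> k - j" .
  qed
  also have "\<dots> = (k - j) * card S" by simp
  finally show ?thesis unfolding S_def .
qed

lemma count_bound:
  assumes du: "d_uniform X d" and fs: "full_support_distribution X d w"
    and lse: "local_spectral_expander X d w lam" and lpos: "\<forall>i \<le> d - 2. lam i > 0"
    and k1: "1 \<le> k" and kd: "k < d"
  shows "m \<le> k - 1 \<Longrightarrow> t \<in> faces X (k - m) \<Longrightarrow>
    real (card {s \<in> faces X k. t \<subseteq> s}) \<ge> (\<Prod>i = k - m..k - 1. 1 / lam i) / fact m"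
proof (induction m arbitrary: t)
  case 0
  have SC: "finite X" using du unfolding d_uniform_def simplicial_complex_def by auto
  have fin: "finite {s \<in> faces X k. t \<subseteq> s}" using SC unfolding faces_def by simp
  have "t \<in> {s \<in> faces X k. t \<subseteq> s}" using 0 by simp
  hence "card {s \<in> faces X k. t \<subseteq> s} \<ge> 1" using fin
    by (metis One_nat_def Suc_leI card_gt_0_iff empty_iff)
  moreover have "{k - 0..k - 1} = {}" using k1 by auto
  ultimately show ?case by simp
next
  case (Suc m)
  have SC: "finite X" "\<forall>s\<in>X. finite s" "\<forall>s\<in>X. \<forall>r. r \<subseteq> s \<longrightarrow> r \<in> X"
    using du unfolding d_uniform_def simplicial_complex_def by auto
  define j where "j = k - Suc m"
  have j1: "1 \<le> j" and jk: "j < k" and jd: "j + 2 \<le> d" and km: "k - m = Suc j"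
    using Suc.prems k1 kd unfolding j_def by auto
  have t: "t \<in> faces X j" using Suc.prems(2) unfolding j_def by simp
  have tX: "t \<in> X" and ct: "card t = j" using t unfolding faces_def by auto
  have fint: "finite t" using tX SC(2) by blast
  define L where "L = link_vertices X t"
  have LX: "L \<subseteq> \<Union>X"
  proof
    fix u assume "u \<in> L"
    hence "insert u t \<in> X" unfolding L_def LV by blast
    thus "u \<in> \<Union>X" by blast
  qed
  have "finite (\<Union>X)" using SC(1,2) by (intro finite_Union) auto
  hence finL: "finite L" using LX by (rule finite_subset[rotated])
  have Lt: "\<forall>u\<in>L. u \<notin> t"
  proof
    fix u assume "u \<in> L"
    thus "u \<notin> t" unfolding L_def LV by simp
  qed
  have jd2: "j \<le> d - 2" using jd by simp
  have lj: "lam j > 0" using lpos jd2 by blast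
  have exj: "two_sided_expander (norm_adj_mat X d w t) (lam j)"
    using lse jd2 t unfolding local_spectral_expander_def by blast
  have cardL: "real (card L) \<ge> 1 / lam j"
    unfolding L_def by (rule link_bound[OF du fs t jd exj lj])
  define P where "P = (\<Prod>i = k - m..k - 1. 1 / lam i)"
  have Pnn: "P \<ge> 0" unfolding P_def using lpos kd
    by (intro prod_nonneg) (auto intro!: less_imp_le)
  have PS: "(\<Prod>i = k - Suc m..k - 1. 1 / lam i) = 1 / lam j * P"
    unfolding P_def j_def[symmetric] km using jk by (subst prod.atLeast_Suc_atMost) auto
  define N where "N = (\<lambda>r. real (card {s \<in> faces X k. r \<subseteq> s}))"
  have IH: "N (insert u t) \<ge> P / fact m" if u: "u \<in> L" for u
  proof -
    have "u \<notin> t" "insert u t \<in> X" using u unfolding L_def LV by auto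
    hence "insert u t \<in> faces X (k - m)" using ct fint km unfolding faces_def by simp
    moreover have "m \<le> k - 1" using Suc.prems(1) by simp
    ultimately show ?thesis unfolding N_def P_def using Suc.IH by blast
  qed
  have "real (card L) * (P / fact m) = (\<Sum>u\<in>L. P / fact m)" by simp
  also have "\<dots> \<le> (\<Sum>u\<in>L. N (insert u t))" using IH by (rule sum_mono)
  also have "\<dots> = real (\<Sum>u\<in>L. card {s \<in> faces X k. insert u t \<subseteq> s})" unfolding N_def by simp
  also have "\<dots> \<le> real ((k - j) * card {s \<in> faces X k. t \<subseteq> s})"
    using double_count[OF SC(1,2) fint ct finL Lt, of k] by (simp only: of_nat_le_iff)
  also have "\<dots> = real (Suc m) * N t" unfolding N_def j_def using Suc.prems k1 by (simp add: algebra_simps)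
  finally have main: "real (card L) * (P / fact m) \<le> real (Suc m) * N t" .
  have "1 / lam j * (P / fact m) \<le> real (card L) * (P / fact m)"
    using cardL Pnn by (intro mult_right_mono) auto
  with main have "1 / lam j * (P / fact m) \<le> real (Suc m) * N t" by linarith
  hence "1 / lam j * (P / fact m) / real (Suc m) \<le> N t"
    by (subst pos_divide_le_eq) (auto simp: mult.commute)
  moreover have "1 / lam j * P / fact (Suc m) = 1 / lam j * (P / fact m) / real (Suc m)"
    by (simp add: fact_Suc field_simps)
  ultimately have "1 / lam j * P / fact (Suc m) \<le> N t" by (simp only:)
  thus ?case unfolding PS N_def by simp
qed


theorem mainTheorem15:
  fixes X :: "'a set set" and d k :: nat and w :: "'a set \<Rightarrow> real" and lam :: "nat \<Rightarrow> real"
  assumes "d_uniform X d"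
    and "full_support_distribution X d w"
    and "local_spectral_expander X d w lam"
    and "\<forall>i \<le> d - 2. lam i > 0"
    and "1 \<le> k" and "k < d"
  shows "real (kdeg X k) \<ge> (1 / fact (k - 1)) * (\<Prod>i = 1..k - 1. 1 / lam i)"
proof -
  have SC: "finite X" "\<forall>s\<in>X. finite s" "\<forall>s\<in>X. \<forall>r. r \<subseteq> s \<longrightarrow> r \<in> X"
    using assms(1) unfolding d_uniform_def simplicial_complex_def by auto
  have down: "\<And>s r. s \<in> X \<Longrightarrow> r \<subseteq> s \<Longrightarrow> r \<in> X" using SC by blast
  have "faces X d \<noteq> {}" using assms(1) unfolding d_uniform_def by simp
  then obtain f where f: "f \<in> faces X d" by blast
  have fX: "f \<in> X" and cf: "card f = d" using f unfolding faces_def by auto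
  have "f \<noteq> {}" using cf assms(5,6) by auto
  then obtain v where v: "v \<in> f" by blast
  have "{v} \<in> X" using down[OF fX, of "{v}"] v by blast
  hence v1: "{v} \<in> faces X 1" unfolding faces_def by simp
  have km: "k - (k - 1) = 1" using assms(5) by simp
  have cb: "real (card {s \<in> faces X k. {v} \<subseteq> s}) \<ge> (\<Prod>i = k - (k - 1)..k - 1. 1 / lam i) / fact (k - 1)"
    using count_bound[OF assms(1-6), of "k - 1" "{v}"] v1 km by simp
  have e: "{s \<in> faces X k. {v} \<subseteq> s} = {s \<in> faces X k. v \<in> s}" by auto
  define D where "D = {card {s \<in> faces X k. v \<in> s} | v. {v} \<in> faces X 1}"
  have "D = (\<lambda>v. card {s \<in> faces X k. v \<in> s}) ` ((\<lambda>v. {v}) -` faces X 1)" unfolding D_def by auto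
  moreover have "finite ((\<lambda>v. {v}) -` faces X 1)"
    using SC(1) unfolding faces_def by (intro finite_vimageI) (auto simp: inj_on_def)
  ultimately have finD: "finite D" by simp
  have "card {s \<in> faces X k. v \<in> s} \<in> D" unfolding D_def using v1 by blast
  hence "card {s \<in> faces X k. v \<in> s} \<le> kdeg X k" unfolding kdeg_def D_def[symmetric]
    using finD by (rule Max_ge[rotated])
  hence "real (card {s \<in> faces X k. v \<in> s}) \<le> real (kdeg X k)" by simp
  moreover have "(1 / fact (k - 1)) * (\<Prod>i = 1..k - 1. 1 / lam i) = (\<Prod>i = k - (k - 1)..k - 1. 1 / lam i) / fact (k - 1)"
    using km by simp
  ultimately show ?thesis using cb e by simp
qed

end
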